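(* Let $\Omega_x,\Omega_y\subset\mathbb{R}$ be bounded domains, $\Omega=\Omega_x\times\Omega_y$, and $f\in L^2(\Omega)$ with $f\neq 0$. Then there exists $(r,s)\in H^1_0(\Omega_x)\times H^1_0(\Omega_y)$ such that $\mathcal{E}(r\otimes s)<0$, where for $u\in H^1_0(\Omega)$, $$\mathcal{E}(u)=\frac12\int_\Omega|\nabla u|^2-\int_\Omega f u.$$
   Context: $(r\otimes s)(x,y)=r(x)s(y)$. *)

theory Defs
  imports "HOL-Analysis.Analysis"
begin

fun Ck :: "nat \<Rightarrow> ('a::real_normed_vector \<Rightarrow> real) \<Rightarrow> bool" where
  "Ck 0 f = continuous_on UNIV f"
| "Ck (Suc k) f = ((\<forall>x. f differentiable (at x)) \<and>
      (\<forall>v. Ck k (\<lambda>x. frechet_derivative f (at x) v)))"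

definition smooth :: "('a::real_normed_vector \<Rightarrow> real) \<Rightarrow> bool" where
  "smooth f \<longleftrightarrow> (\<forall>k. Ck k f)"

definition test_fun :: "'a::euclidean_space set \<Rightarrow> ('a \<Rightarrow> real) \<Rightarrow> bool" where
  "test_fun U \<phi> \<longleftrightarrow> smooth \<phi> \<and> compact (closure {x. \<phi> x \<noteq> 0}) \<and> closure {x. \<phi> x \<noteq> 0} \<subseteq> U"

definition grad :: "('a::euclidean_space \<Rightarrow> real) \<Rightarrow> 'a \<Rightarrow> 'a" where
  "grad \<phi> z = (\<Sum>i\<in>Basis. frechet_derivative \<phi> (at z) i *\<^sub>R i)"

definition L2 :: "'a::euclidean_space set \<Rightarrow> ('a \<Rightarrow> real) \<Rightarrow> bool" where
  "L2 U u \<longleftrightarrow> set_borel_measurable lborel U u \<and> set_integrable lborel U (\<lambda>z. (u z)\<^sup>2)"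

definition weak_grad :: "'a::euclidean_space set \<Rightarrow> ('a \<Rightarrow> real) \<Rightarrow> ('a \<Rightarrow> 'a) \<Rightarrow> bool" where
  "weak_grad U u g \<longleftrightarrow> L2 U u \<and> (\<forall>i\<in>Basis. L2 U (\<lambda>z. g z \<bullet> i)) \<and>
     (\<forall>\<phi>. test_fun U \<phi> \<longrightarrow> (\<forall>i\<in>Basis.
        (LINT z:U|lborel. u z * frechet_derivative \<phi> (at z) i) = - (LINT z:U|lborel. (g z \<bullet> i) * \<phi> z)))"

definition H10 :: "'a::euclidean_space set \<Rightarrow> ('a \<Rightarrow> real) \<Rightarrow> bool" where
  "H10 U u \<longleftrightarrow> (\<exists>g. weak_grad U u g \<and>
     (\<exists>\<phi>. (\<forall>n. test_fun U (\<phi> n)) \<and>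
        (\<lambda>n. LINT z:U|lborel. (\<phi> n z - u z)\<^sup>2) \<longlonglongrightarrow> 0 \<and>
        (\<lambda>n. LINT z:U|lborel. (norm (grad (\<phi> n) z - g z))\<^sup>2) \<longlonglongrightarrow> 0))"

text \<open>The weak gradient (unique a.e. when it exists).\<close>
definition wgrad :: "'a::euclidean_space set \<Rightarrow> ('a \<Rightarrow> real) \<Rightarrow> 'a \<Rightarrow> 'a" where
  "wgrad U u = (SOME g. weak_grad U u g)"

definition energy :: "'a::euclidean_space set \<Rightarrow> ('a \<Rightarrow> real) \<Rightarrow> ('a \<Rightarrow> real) \<Rightarrow> real" where
  "energy U f u = (1/2) * (LINT z:U|lborel. (norm (wgrad U u z))\<^sup>2) - (LINT z:U|lborel. f z * u z)"

definition tensor :: "(real \<Rightarrow> real) \<Rightarrow> (real \<Rightarrow> real) \<Rightarrow> real \<times> real \<Rightarrow> real" where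
  "tensor r s = (\<lambda>(x, y). r x * s y)"

end

theory Submission
  imports Defs
begin

fun C1 :: "nat \<Rightarrow> (real \<Rightarrow> real) \<Rightarrow> bool" where
  "C1 0 f = True"
| "C1 (Suc k) f = ((\<forall>x. f differentiable (at x)) \<and> C1 k (deriv f))"

definition sm :: "(real \<Rightarrow> real) \<Rightarrow> bool" where
  "sm f \<longleftrightarrow> (\<forall>k. C1 k f)"

lemma C1_mono: "C1 (Suc k) f \<Longrightarrow> C1 k f"
proof (induction k arbitrary: f)
  case 0 then show ?case by simp
next
  case (Suc k) then show ?case by simp
qed

lemma deriv_add_fun:
  fixes f g :: "real \<Rightarrow> real"
  assumes "\<forall>x. f differentiable (at x)" "\<forall>x. g differentiable (at x)"
  shows "deriv (\<lambda>x. f x + g x) = (\<lambda>x. deriv f x + deriv g x)"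
proof
  fix x
  have "((\<lambda>x. f x + g x) has_real_derivative deriv f x + deriv g x) (at x)"
    using assms by (intro DERIV_add) (auto simp: DERIV_deriv_iff_real_differentiable)
  then show "deriv (\<lambda>x. f x + g x) x = deriv f x + deriv g x" by (rule DERIV_imp_deriv)
qed

lemma deriv_mult_fun:
  fixes f g :: "real \<Rightarrow> real"
  assumes "\<forall>x. f differentiable (at x)" "\<forall>x. g differentiable (at x)"
  shows "deriv (\<lambda>x. f x * g x) = (\<lambda>x. deriv f x * g x + f x * deriv g x)"
proof
  fix x
  have "((\<lambda>x. f x * g x) has_real_derivative deriv f x * g x + f x * deriv g x) (at x)"
    using assms DERIV_mult[of f "deriv f x" x UNIV g "deriv g x"]
    by (auto simp: DERIV_deriv_iff_real_differentiable algebra_simps)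
  then show "deriv (\<lambda>x. f x * g x) x = deriv f x * g x + f x * deriv g x" by (rule DERIV_imp_deriv)
qed

lemma deriv_affine_fun:
  fixes f :: "real \<Rightarrow> real"
  assumes "\<forall>x. f differentiable (at x)"
  shows "deriv (\<lambda>x. f (a * x + b)) = (\<lambda>x. a * deriv f (a * x + b))"
proof
  fix x
  have d: "(f has_real_derivative deriv f (a*x+b)) (at (a*x+b))"
    using assms by (auto simp: DERIV_deriv_iff_real_differentiable)
  have "((\<lambda>x. a * x + b) has_real_derivative a) (at x)"
    by (auto intro!: derivative_eq_intros)
  from DERIV_chain2[OF d this]
  have "((\<lambda>x. f (a * x + b)) has_real_derivative deriv f (a*x+b) * a) (at x)" .
  then show "deriv (\<lambda>x. f (a * x + b)) x = a * deriv f (a * x + b)"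
    by (subst DERIV_imp_deriv) (auto simp: mult.commute)
qed

lemma C1_const: "C1 k (\<lambda>x. c)"
proof (induction k arbitrary: c)
  case 0 then show ?case by simp
next
  case (Suc k)
  have "deriv (\<lambda>x. c) = (\<lambda>x. 0)" by (auto intro!: DERIV_imp_deriv derivative_eq_intros)
  then show ?case using Suc by simp
qed

lemma C1_add: "C1 k f \<Longrightarrow> C1 k g \<Longrightarrow> C1 k (\<lambda>x. f x + g x)"
proof (induction k arbitrary: f g)
  case 0 then show ?case by simp
next
  case (Suc k)
  then show ?case
    by (auto simp: deriv_add_fun intro!: differentiable_add)
qed

lemma C1_mult: "C1 k f \<Longrightarrow> C1 k g \<Longrightarrow> C1 k (\<lambda>x. f x * g x)"
proof (induction k arbitrary: f g)
  case 0 then show ?case by simp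
next
  case (Suc k)
  then have d: "\<forall>x. f differentiable (at x)" "\<forall>x. g differentiable (at x)" by auto
  have "C1 k (\<lambda>x. deriv f x * g x)" using Suc.prems C1_mono[OF Suc.prems(2)] by (intro Suc.IH) auto
  moreover have "C1 k (\<lambda>x. f x * deriv g x)" using Suc.prems C1_mono[OF Suc.prems(1)] by (intro Suc.IH) auto
  ultimately show ?case using d
    by (auto simp: deriv_mult_fun intro!: differentiable_mult C1_add)
qed

lemma C1_cmult: "C1 k f \<Longrightarrow> C1 k (\<lambda>x. c * f x)"
  using C1_mult[OF C1_const] by blast

lemma C1_affine: "C1 k f \<Longrightarrow> C1 k (\<lambda>x. f (a * x + b))"
proof (induction k arbitrary: f)
  case 0 then show ?case by simp
next
  case (Suc k)
  then have d: "\<forall>x. f differentiable (at x)" by auto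
  have "C1 k (\<lambda>x. deriv f (a * x + b))" using Suc by auto
  then have "C1 k (\<lambda>x. a * deriv f (a * x + b))" by (rule C1_cmult)
  moreover have "\<forall>x. (\<lambda>x. f (a * x + b)) differentiable (at x)"
  proof
    fix x
    have "f differentiable (at (a*x+b))" using d by auto
    then show "(\<lambda>x. f (a * x + b)) differentiable (at x)"
      by (auto intro!: differentiable_compose[where f=f and g="\<lambda>x. a*x+b", unfolded o_def])
  qed
  ultimately show ?case using d by (simp add: deriv_affine_fun)
qed

lemma C1_power: "C1 k f \<Longrightarrow> C1 k (\<lambda>x. f x ^ n)"
  by (induction n) (auto intro: C1_const C1_mult)

lemma sm_const: "sm (\<lambda>x. c)" by (simp add: sm_def C1_const)
lemma sm_add: "sm f \<Longrightarrow> sm g \<Longrightarrow> sm (\<lambda>x. f x + g x)" by (simp add: sm_def C1_add)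
lemma sm_mult: "sm f \<Longrightarrow> sm g \<Longrightarrow> sm (\<lambda>x. f x * g x)" by (simp add: sm_def C1_mult)
lemma sm_cmult: "sm f \<Longrightarrow> sm (\<lambda>x. c * f x)" by (simp add: sm_def C1_cmult)
lemma sm_affine: "sm f \<Longrightarrow> sm (\<lambda>x. f (a * x + b))" by (simp add: sm_def C1_affine)
lemma sm_power: "sm f \<Longrightarrow> sm (\<lambda>x. f x ^ n)" by (simp add: sm_def C1_power)
lemma sm_diff: "sm f \<Longrightarrow> sm g \<Longrightarrow> sm (\<lambda>x. f x - g x)"
  using sm_add[of f "\<lambda>x. (-1) * g x"] sm_cmult[of g "-1"] by simp
lemma sm_deriv: "sm f \<Longrightarrow> sm (deriv f)"
  unfolding sm_def by (metis C1.simps(2))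
lemma sm_differentiable: "sm f \<Longrightarrow> f differentiable (at x)"
  unfolding sm_def by (metis C1.simps(2))
lemma sm_DERIV: "sm f \<Longrightarrow> (f has_real_derivative deriv f x) (at x)"
  using sm_differentiable DERIV_deriv_iff_real_differentiable by blast

definition Q :: "real poly \<Rightarrow> real \<Rightarrow> real" where
  "Q p x = (if 0 < x then poly p (inverse x) * exp (- inverse x) else 0)"

definition stepp :: "real poly \<Rightarrow> real poly" where
  "stepp p = monom 1 2 * (p - pderiv p)"

lemma Q_deriv_pos:
  assumes x: "0 < x"
  shows "(Q p has_real_derivative Q (stepp p) x) (at x)"
proof -
  have d1: "((\<lambda>x. poly p (inverse x)) has_real_derivative poly (pderiv p) (inverse x) * (- (inverse x ^ 2))) (at x)"
    using DERIV_chain2[OF poly_DERIV[of p "inverse x"] DERIV_inverse[of x UNIV]] x by (simp add: power2_eq_square)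
  have d2: "((\<lambda>x. exp (- inverse x)) has_real_derivative exp (- inverse x) * (- (- (inverse x ^ 2)))) (at x)"
    using DERIV_chain2[OF DERIV_exp[of "- inverse x"] DERIV_minus[OF DERIV_inverse[of x UNIV]]] x by (simp add: power2_eq_square)
  have d: "((\<lambda>x. poly p (inverse x) * exp (- inverse x)) has_real_derivative
      poly (pderiv p) (inverse x) * (- (inverse x ^ 2)) * exp (- inverse x) + poly p (inverse x) * (exp (- inverse x) * (- (- (inverse x ^ 2))))) (at x)"
    using DERIV_mult[OF d1 d2] by (simp add: algebra_simps)
  have e: "poly (pderiv p) (inverse x) * (- (inverse x ^ 2)) * exp (- inverse x) + poly p (inverse x) * (exp (- inverse x) * (- (- (inverse x ^ 2))))
      = Q (stepp p) x"
    using x by (simp add: Q_def stepp_def poly_monom algebra_simps)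
  show ?thesis
    apply (rule has_field_derivative_transform_within_open[where S="{0<..}" and f="\<lambda>x. poly p (inverse x) * exp (- inverse x)"])
    using d e x by (auto simp: Q_def)
qed

lemma Q_deriv_neg:
  assumes x: "x < 0"
  shows "(Q p has_real_derivative Q (stepp p) x) (at x)"
proof -
  have "(Q p has_real_derivative 0) (at x)"
    by (rule has_field_derivative_transform_within_open[of "\<lambda>x. 0" 0 x "{..<0}"]) (use x in \<open>auto simp: Q_def\<close>)
  then show ?thesis using x by (simp add: Q_def)
qed

lemma poly_exp_lim: fixes p :: "real poly" shows "((\<lambda>t. t * poly p t * exp (- t)) \<longlongrightarrow> 0) at_top"
proof -
  have "((\<lambda>t. \<Sum>i\<le>degree p. coeff p i * (t ^ (Suc i) / exp t)) \<longlongrightarrow> (\<Sum>i\<le>degree p. coeff p i * 0)) at_top"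
    by (intro tendsto_sum tendsto_mult tendsto_const tendsto_power_div_exp_0)
  moreover have "(\<lambda>t. \<Sum>i\<le>degree p. coeff p i * (t ^ (Suc i) / exp t)) = (\<lambda>t. t * poly p t * exp (- t))"
    by (auto simp: poly_altdef sum_distrib_left sum_distrib_right exp_minus field_simps)
  ultimately show ?thesis by simp
qed

lemma Q_deriv_zero: "(Q p has_real_derivative Q (stepp p) 0) (at 0)"
proof -
  have "Q (stepp p) 0 = 0" by (simp add: Q_def)
  moreover have "((\<lambda>y. (Q p y - Q p 0) / (y - 0)) \<longlongrightarrow> 0) (at 0)"
    unfolding filterlim_at_split
  proof
    show "((\<lambda>y. (Q p y - Q p 0) / (y - 0)) \<longlongrightarrow> 0) (at_left 0)"
    proof (rule tendsto_eventually)
      show "\<forall>\<^sub>F y in at_left 0. (Q p y - Q p 0) / (y - 0) = (0::real)"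
        using eventually_at_left_real[of "-1" "0::real", OF neg_less_0_iff_less[THEN iffD2, OF zero_less_one]] by eventually_elim (simp add: Q_def)
    qed
  next
    have "((\<lambda>y. inverse y * poly p (inverse y) * exp (- inverse y)) \<longlongrightarrow> 0) (at_right 0)"
      by (rule filterlim_compose[OF poly_exp_lim filterlim_inverse_at_top_right])
    moreover have "\<forall>\<^sub>F y in at_right 0. inverse y * poly p (inverse y) * exp (- inverse y) = (Q p y - Q p 0) / (y - 0)"
      using eventually_at_right_less[of "0::real"] by eventually_elim (simp add: Q_def field_simps)
    ultimately show "((\<lambda>y. (Q p y - Q p 0) / (y - 0)) \<longlongrightarrow> 0) (at_right 0)"
      by (rule Lim_transform_eventually)
  qed
  ultimately show ?thesis by (simp add: has_field_derivative_iff)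
qed

lemma Q_deriv: "(Q p has_real_derivative Q (stepp p) x) (at x)"
  using Q_deriv_pos Q_deriv_neg Q_deriv_zero by (cases x "0::real" rule: linorder_cases) auto

lemma C1_Q: "C1 k (Q p)"
proof (induction k arbitrary: p)
  case 0 then show ?case by simp
next
  case (Suc k)
  have "deriv (Q p) = Q (stepp p)" using Q_deriv DERIV_imp_deriv by blast
  moreover have "\<forall>x. Q p differentiable (at x)" using Q_deriv real_differentiable_def by blast
  ultimately show ?case using Suc by simp
qed

definition psi :: "real \<Rightarrow> real" where
  "psi x = (if 0 < x then exp (- inverse x) else 0)"

lemma sm_psi: "sm psi"
proof -
  have "psi = Q 1" by (auto simp: psi_def Q_def)
  then show ?thesis unfolding sm_def using C1_Q by metis
qed

lemma psi_pos: "0 < x \<Longrightarrow> 0 < psi x" by (simp add: psi_def)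
lemma psi_zero: "x \<le> 0 \<Longrightarrow> psi x = 0" by (simp add: psi_def)
lemma psi_nonneg: "0 \<le> psi x" by (simp add: psi_def)
lemma psi_le1: "psi x \<le> 1" by (simp add: psi_def)

lemma frechet_real:
  assumes "(f has_real_derivative d) (at x)"
  shows "frechet_derivative f (at x) v = d * v"
proof -
  have "(f has_derivative (\<lambda>v. d * v)) (at x)" using assms by (simp add: has_field_derivative_def)
  then show ?thesis using frechet_derivative_at by metis
qed

lemma sm_Ck: "sm f \<Longrightarrow> Ck k f"
proof (induction k arbitrary: f)
  case 0
  then show ?case
    by (auto intro!: continuous_at_imp_continuous_on differentiable_imp_continuous_within sm_differentiable)
next
  case (Suc k)
  have "(\<lambda>x. frechet_derivative f (at x) v) = (\<lambda>x. deriv f x * v)" for v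
    using frechet_real[OF sm_DERIV[OF Suc.prems]] by auto
  moreover have "sm (\<lambda>x. deriv f x * v)" for v
    using Suc.prems by (intro sm_mult sm_deriv sm_const)
  ultimately show ?case using Suc sm_differentiable by auto
qed

lemma sm_smooth: "sm f \<Longrightarrow> smooth f"
  by (simp add: smooth_def sm_Ck)

fun TT :: "((real \<Rightarrow> real) \<times> (real \<Rightarrow> real)) list \<Rightarrow> real \<times> real \<Rightarrow> real" where
  "TT [] z = 0"
| "TT ((r,s)#L) z = r (fst z) * s (snd z) + TT L z"

fun DD :: "real \<times> real \<Rightarrow> ((real \<Rightarrow> real) \<times> (real \<Rightarrow> real)) list \<Rightarrow> ((real \<Rightarrow> real) \<times> (real \<Rightarrow> real)) list" where
  "DD v [] = []"
| "DD v ((r,s)#L) = (\<lambda>x. deriv r x * fst v, s) # (r, \<lambda>y. deriv s y * snd v) # DD v L"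

definition allsm where "allsm L \<longleftrightarrow> (\<forall>(r,s)\<in>set L. sm r \<and> sm s)"

lemma allsm_DD: "allsm L \<Longrightarrow> allsm (DD v L)"
  by (induction v L rule: DD.induct) (auto simp: allsm_def intro!: sm_mult sm_deriv sm_const)

lemma tensor1_deriv:
  assumes "sm r" "sm s"
  shows "((\<lambda>z. r (fst z) * s (snd z)) has_derivative
     (\<lambda>v. deriv r (fst z) * fst v * s (snd z) + r (fst z) * (deriv s (snd z) * snd v))) (at z)"
proof -
  have dr: "(r has_derivative (\<lambda>h. deriv r (fst z) * h)) (at (fst z))"
    using sm_DERIV[OF assms(1)] by (simp add: has_field_derivative_def)
  have ds: "(s has_derivative (\<lambda>h. deriv s (snd z) * h)) (at (snd z))"
    using sm_DERIV[OF assms(2)] by (simp add: has_field_derivative_def)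
  have r1: "((\<lambda>z. r (fst z)) has_derivative (\<lambda>v. deriv r (fst z) * fst v)) (at z)"
    using diff_chain_at[OF has_derivative_fst[OF has_derivative_ident] dr] by (simp add: o_def)
  have s1: "((\<lambda>z. s (snd z)) has_derivative (\<lambda>v. deriv s (snd z) * snd v)) (at z)"
    using diff_chain_at[OF has_derivative_snd[OF has_derivative_ident] ds] by (simp add: o_def)
  show ?thesis
    using has_derivative_mult[OF r1 s1] by (simp add: algebra_simps)
qed

lemma TT_deriv: "allsm L \<Longrightarrow> (TT L has_derivative (\<lambda>v. TT (DD v L) z)) (at z)"
proof (induction L)
  case Nil then show ?case by simp
next
  case (Cons a L)
  obtain r s where a: "a = (r,s)" by (cases a)
  have rs: "sm r" "sm s" "allsm L" using Cons.prems a by (auto simp: allsm_def)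
  have "((\<lambda>z. r (fst z) * s (snd z) + TT L z) has_derivative
     (\<lambda>v. (deriv r (fst z) * fst v * s (snd z) + r (fst z) * (deriv s (snd z) * snd v)) + TT (DD v L) z)) (at z)"
    by (rule has_derivative_add[OF tensor1_deriv[OF rs(1,2)] Cons.IH[OF rs(3)]])
  then show ?case using a by (simp add: algebra_simps)
qed

lemma TT_Ck: "allsm L \<Longrightarrow> Ck k (TT L)"
proof (induction k arbitrary: L)
  case 0
  have "isCont (TT L) z" for z using has_derivative_continuous[OF TT_deriv[OF 0]] .
  then show ?case by (simp add: continuous_at_imp_continuous_on)
next
  case (Suc k)
  have "frechet_derivative (TT L) (at z) v = TT (DD v L) z" for z v
    using fun_cong[OF frechet_derivative_at[OF TT_deriv[OF Suc.prems]], of v] by simp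
  then have "(\<lambda>z. frechet_derivative (TT L) (at z) v) = TT (DD v L)" for v by auto
  note eq = this
  have "\<forall>x. TT L differentiable (at x)" using TT_deriv[OF Suc.prems] differentiable_def by blast
  moreover have "\<forall>v. Ck k (\<lambda>z. frechet_derivative (TT L) (at z) v)"
  proof
    fix v show "Ck k (\<lambda>z. frechet_derivative (TT L) (at z) v)"
      unfolding eq by (rule Suc.IH[OF allsm_DD[OF Suc.prems]])
  qed
  ultimately show ?case by simp
qed

lemma tensor_TT: "tensor r s = TT [(r,s)]"
  by (auto simp: tensor_def)

lemma smooth_tensor: "sm r \<Longrightarrow> sm s \<Longrightarrow> smooth (tensor r s)"
  unfolding smooth_def tensor_TT by (auto intro!: TT_Ck simp: allsm_def)

lemma tensor_deriv:
  assumes "sm r" "sm s"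
  shows "(tensor r s has_derivative
     (\<lambda>v. deriv r (fst z) * fst v * s (snd z) + r (fst z) * (deriv s (snd z) * snd v))) (at z)"
proof -
  have "tensor r s = (\<lambda>z. r (fst z) * s (snd z))" by (auto simp: tensor_def)
  then show ?thesis using tensor1_deriv[OF assms] by simp
qed

lemma tensor_frechet:
  assumes "sm r" "sm s"
  shows "frechet_derivative (tensor r s) (at z) v = deriv r (fst z) * fst v * s (snd z) + r (fst z) * (deriv s (snd z) * snd v)"
  using fun_cong[OF frechet_derivative_at[OF tensor_deriv[OF assms, of z]], of v] by simp

lemma smooth_facts:
  assumes "smooth \<phi>"
  shows "\<phi> differentiable (at x)" "continuous_on UNIV \<phi>"
    "continuous_on UNIV (\<lambda>z. frechet_derivative \<phi> (at z) v)"
proof -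
  have "Ck (Suc 0) \<phi>" "Ck 0 \<phi>" using assms unfolding smooth_def by blast+
  then show "\<phi> differentiable (at x)" "continuous_on UNIV \<phi>"
    "continuous_on UNIV (\<lambda>z. frechet_derivative \<phi> (at z) v)" by auto
qed

definition bump :: "real \<Rightarrow> real \<Rightarrow> real \<Rightarrow> real" where
  "bump a b x = psi (x - a) * psi (b - x)"

lemma sm_bump: "sm (bump a b)"
proof -
  have "sm (\<lambda>x. psi (1 * x + (-a)))" "sm (\<lambda>x. psi ((-1) * x + b))"
    using sm_affine[OF sm_psi] by blast+
  then have "sm (\<lambda>x. psi (1 * x + (-a)) * psi ((-1) * x + b))" by (rule sm_mult)
  moreover have "(\<lambda>x. psi (1 * x + (-a)) * psi ((-1) * x + b)) = bump a b"
    by (auto simp: bump_def)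
  ultimately show ?thesis by simp
qed

lemma bump_pos: "a < x \<Longrightarrow> x < b \<Longrightarrow> 0 < bump a b x"
  by (simp add: bump_def psi_pos)
lemma bump_zero: "x \<notin> {a<..<b} \<Longrightarrow> bump a b x = 0"
  by (auto simp: bump_def psi_zero)
lemma bump_nonneg: "0 \<le> bump a b x"
  by (simp add: bump_def psi_nonneg)
lemma bump_le1: "bump a b x \<le> 1"
  unfolding bump_def by (rule mult_le_one) (auto simp: psi_le1 psi_nonneg)

definition rn :: "real \<Rightarrow> real \<Rightarrow> nat \<Rightarrow> real \<Rightarrow> real" where
  "rn a b n x = 1 - (1 - bump a b x) ^ n"

lemma sm_rn: "sm (rn a b n)"
  unfolding rn_def by (intro sm_diff sm_const sm_power sm_bump)

lemma rn_zero: "x \<notin> {a<..<b} \<Longrightarrow> rn a b n x = 0"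
  by (simp add: rn_def bump_zero)

lemma rn_bound: "\<bar>rn a b n x\<bar> \<le> 1"
proof -
  have "0 \<le> 1 - bump a b x" "1 - bump a b x \<le> 1" using bump_le1 bump_nonneg by auto
  then have "0 \<le> (1 - bump a b x) ^ n" "(1 - bump a b x) ^ n \<le> 1"
    by (auto intro: power_le_one)
  then show ?thesis by (simp add: rn_def)
qed

lemma rn_lim: "(\<lambda>n. rn a b n x) \<longlonglongrightarrow> indicator {a<..<b} x"
proof (cases "x \<in> {a<..<b}")
  case True
  then have "0 < bump a b x" by (auto intro: bump_pos)
  then have "norm (1 - bump a b x) < 1" using bump_le1[of a b x] by auto
  then have "(\<lambda>n. (1 - bump a b x) ^ n) \<longlonglongrightarrow> 0" by (rule LIMSEQ_power_zero)
  then have "(\<lambda>n. 1 - (1 - bump a b x) ^ n) \<longlonglongrightarrow> 1 - 0" by (intro tendsto_diff tendsto_const)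
  then show ?thesis using True by (simp add: rn_def)
next
  case False
  then show ?thesis by (simp add: rn_zero)
qed

lemma test_fun_rn:
  assumes "{a..b} \<subseteq> X"
  shows "test_fun X (rn a b n)"
proof -
  have "{x. rn a b n x \<noteq> 0} \<subseteq> {a<..<b}" using rn_zero by blast
  then have sub: "{x. rn a b n x \<noteq> 0} \<subseteq> {a..b}" by auto
  then have "closure {x. rn a b n x \<noteq> 0} \<subseteq> {a..b}"
    by (intro closure_minimal) auto
  moreover have "bounded {x. rn a b n x \<noteq> 0}"
    using sub bounded_subset[OF compact_imp_bounded[OF compact_Icc]] by blast
  ultimately show ?thesis using assms
    by (auto simp: test_fun_def sm_smooth sm_rn compact_closure)
qed

lemma Basis_real_prod: "(Basis :: (real \<times> real) set) = {(1,0),(0,1)}"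
  by (auto simp: Basis_prod_def)

lemma frechet_zero_open:
  assumes "open S" "z \<in> S" "\<And>x. x \<in> S \<Longrightarrow> w x = 0"
  shows "frechet_derivative w (at z) = (\<lambda>h. 0)"
proof -
  have "((\<lambda>x. 0) has_derivative (\<lambda>h. 0)) (at z)" by simp
  then have "(w has_derivative (\<lambda>h. 0)) (at z)"
    by (rule has_derivative_transform_within_open[OF _ assms(1,2)]) (use assms(3) in auto)
  then show ?thesis using frechet_derivative_at by metis
qed

lemma open_fst_lt: "open {p::real\<times>real. fst p < a}"
  using open_vimage_fst[of "{..<a}"] by (simp add: vimage_def)
lemma open_fst_gt: "open {p::real\<times>real. a < fst p}"
  using open_vimage_fst[of "{a<..}"] by (simp add: vimage_def)
lemma open_snd_lt: "open {p::real\<times>real. snd p < a}"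
  using open_vimage_snd[of "{..<a}"] by (simp add: vimage_def)
lemma open_snd_gt: "open {p::real\<times>real. a < snd p}"
  using open_vimage_snd[of "{a<..}"] by (simp add: vimage_def)

lemma ibp_core1:
  fixes w w' :: "real \<Rightarrow> real"
  assumes d: "\<And>x. (w has_real_derivative w' x) (at x)" and c: "continuous_on UNIV w'"
    and z: "\<And>x. x \<notin> {A<..<B} \<Longrightarrow> w x = 0"
  shows "integrable lborel w' \<and> integral\<^sup>L lborel w' = 0"
proof -
  have w'0: "w' x = 0" if xn: "x \<notin> {A..B}" for x
  proof -
    obtain S where S: "open S" "x \<in> S" "S \<inter> {A<..<B} = {}"
    proof (cases "x < A")
      case True
      show ?thesis by (rule that[of "{..<A}"]) (use True in auto)
    next
      case False
      then have "B < x" using xn by auto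
      show ?thesis by (rule that[of "{B<..}"]) (use \<open>B < x\<close> in auto)
    qed
    have wS: "w x' = 0" if "x' \<in> S" for x'
    proof -
      have "x' \<notin> {A<..<B}" using S(3) that by auto
      then show ?thesis by (rule z)
    qed
    have "(w has_real_derivative 0) (at x)"
      by (rule has_field_derivative_transform_within_open[of "\<lambda>x. 0" 0 x S]) (use S wS in auto)
    then show ?thesis using DERIV_unique d by blast
  qed
  have eq: "w' = (\<lambda>x. indicator {A..B} x *\<^sub>R w' x)"
  proof (rule ext)
    fix x show "w' x = indicator {A..B} x *\<^sub>R w' x"
      by (cases "x \<in> {A..B}") (simp_all add: w'0)
  qed
  have int: "integrable lborel w'"
    by (subst eq) (rule borel_integrable_compact, auto intro: continuous_on_subset[OF c])
  have "integral\<^sup>L lborel w' = 0"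
  proof (cases "A \<le> B")
    case True
    have "integral\<^sup>L lborel (\<lambda>x. indicator {A..B} x *\<^sub>R w' x) = w B - w A"
    proof (rule integral_FTC_atLeastAtMost[OF True])
      show "\<And>x. A \<le> x \<Longrightarrow> x \<le> B \<Longrightarrow> (w has_vector_derivative w' x) (at x within {A..B})"
        using d by (auto simp: has_real_derivative_iff_has_vector_derivative[symmetric] intro: has_field_derivative_at_within)
      show "continuous_on {A..B} w'" using c by (rule continuous_on_subset) auto
    qed
    moreover have "w A = 0" "w B = 0" using z by auto
    ultimately show ?thesis using eq by simp
  next
    case False
    then have "w' = (\<lambda>x. 0)" using w'0 by auto
    then show ?thesis by simp
  qed
  with int show ?thesis by simp
qed

lemma sec1:
  fixes w :: "real \<times> real \<Rightarrow> real"
  assumes "w differentiable (at (x,y))"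
  shows "((\<lambda>x. w (x,y)) has_real_derivative frechet_derivative w (at (x,y)) (1,0)) (at x)"
proof -
  let ?F = "frechet_derivative w (at (x,y))"
  have dw: "(w has_derivative ?F) (at (x,y))" using assms frechet_derivative_works by blast
  have lin: "linear ?F" using has_derivative_linear[OF dw] .
  have dp: "((\<lambda>x. (x,y)) has_derivative (\<lambda>h. (h,0))) (at x)"
    by (auto intro!: derivative_eq_intros)
  have "((\<lambda>x. w (x,y)) has_derivative (\<lambda>h. ?F (h,0))) (at x)"
    using diff_chain_at[OF dp, of w ?F] dw by (simp add: o_def)
  moreover have "(\<lambda>h. ?F (h,0)) = (\<lambda>h. ?F (1,0) * h)"
  proof
    fix h :: real
    have "?F (h,0) = ?F (h *\<^sub>R (1,0))" by simp
    also have "\<dots> = h *\<^sub>R ?F (1,0)" by (rule linear_cmul[OF lin])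
    finally show "?F (h,0) = ?F (1,0) * h" by simp
  qed
  ultimately show ?thesis by (simp add: has_field_derivative_def)
qed

lemma sec2:
  fixes w :: "real \<times> real \<Rightarrow> real"
  assumes "w differentiable (at (x,y))"
  shows "((\<lambda>y. w (x,y)) has_real_derivative frechet_derivative w (at (x,y)) (0,1)) (at y)"
proof -
  let ?F = "frechet_derivative w (at (x,y))"
  have dw: "(w has_derivative ?F) (at (x,y))" using assms frechet_derivative_works by blast
  have lin: "linear ?F" using has_derivative_linear[OF dw] .
  have dp: "((\<lambda>y. (x,y)) has_derivative (\<lambda>h. (0,h))) (at y)"
    by (auto intro!: derivative_eq_intros)
  have "((\<lambda>y. w (x,y)) has_derivative (\<lambda>h. ?F (0,h))) (at y)"
    using diff_chain_at[OF dp, of w ?F] dw by (simp add: o_def)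
  moreover have "(\<lambda>h. ?F (0,h)) = (\<lambda>h. ?F (0,1) * h)"
  proof
    fix h :: real
    have "?F (0,h) = ?F (h *\<^sub>R (0,1))" by simp
    also have "\<dots> = h *\<^sub>R ?F (0,1)" by (rule linear_cmul[OF lin])
    finally show "?F (0,h) = ?F (0,1) * h" by simp
  qed
  ultimately show ?thesis by (simp add: has_field_derivative_def)
qed

lemma ibp_core2:
  fixes w :: "real \<times> real \<Rightarrow> real" and i :: "real \<times> real"
  assumes d: "\<And>z. w differentiable (at z)"
    and c: "continuous_on UNIV (\<lambda>z. frechet_derivative w (at z) i)" and i: "i \<in> Basis"
    and z: "\<And>x y. x \<notin> {A<..<B} \<or> y \<notin> {C<..<D} \<Longrightarrow> w (x,y) = 0"
  shows "integrable lborel (\<lambda>z. frechet_derivative w (at z) i) \<and>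
         integral\<^sup>L lborel (\<lambda>z. frechet_derivative w (at z) i) = 0"
proof -
  define g where "g z = frechet_derivative w (at z) i" for z
  have g0: "g z = 0" if zn: "z \<notin> cbox (A,C) (B,D)" for z
  proof -
    obtain x y where xy: "z = (x,y)" by force
    obtain S where S: "open S" "z \<in> S" "\<And>p. p \<in> S \<Longrightarrow> fst p \<notin> {A<..<B} \<or> snd p \<notin> {C<..<D}"
    proof -
      have "x < A \<or> B < x \<or> y < C \<or> D < y" using zn xy by (auto simp: cbox_Pair_eq)
      then show ?thesis
      proof (elim disjE)
        assume "x < A" then show ?thesis
          by (intro that[of "{p. fst p < A}"]) (auto simp: xy open_fst_lt open_fst_gt open_snd_lt open_snd_gt)
      next
        assume "B < x" then show ?thesis
          by (intro that[of "{p. B < fst p}"]) (auto simp: xy open_fst_lt open_fst_gt open_snd_lt open_snd_gt)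
      next
        assume "y < C" then show ?thesis
          by (intro that[of "{p. snd p < C}"]) (auto simp: xy open_fst_lt open_fst_gt open_snd_lt open_snd_gt)
      next
        assume "D < y" then show ?thesis
          by (intro that[of "{p. D < snd p}"]) (auto simp: xy open_fst_lt open_fst_gt open_snd_lt open_snd_gt)
      qed
    qed
    have "frechet_derivative w (at z) = (\<lambda>h. 0)"
      by (rule frechet_zero_open[OF S(1,2)]) (use S(3) z in force)
    then show ?thesis by (simp add: g_def)
  qed
  have eq: "g = (\<lambda>z. indicator (cbox (A,C) (B,D)) z *\<^sub>R g z)"
  proof (rule ext)
    fix z show "g z = indicator (cbox (A,C) (B,D)) z *\<^sub>R g z"
      by (cases "z \<in> cbox (A,C) (B,D)") (simp_all add: g0)
  qed
  have int: "integrable lborel g"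
    by (subst eq) (rule borel_integrable_compact, auto intro: continuous_on_subset[OF c[folded g_def]])
  have intP: "integrable (lborel \<Otimes>\<^sub>M lborel) g" using int by (simp add: lborel_prod)
  have cg: "continuous_on UNIV g" using c by (simp add: g_def[abs_def])
  have "integral\<^sup>L lborel g = 0"
  proof (cases "i = (1,0)")
    case True
    have inner: "(\<integral>x. g (x,y) \<partial>lborel) = 0" for y
    proof -
      have "integrable lborel (\<lambda>x. g (x,y)) \<and> integral\<^sup>L lborel (\<lambda>x. g (x,y)) = 0"
      proof (rule ibp_core1[of "\<lambda>x. w (x,y)" _ A B])
        show "((\<lambda>x. w (x,y)) has_real_derivative g (x,y)) (at x)" for x
          using sec1[OF d] True by (simp add: g_def)
        show "continuous_on UNIV (\<lambda>x. g (x,y))"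
          by (rule continuous_on_compose2[OF cg]) (auto intro: continuous_intros)
        show "x \<notin> {A<..<B} \<Longrightarrow> w (x,y) = 0" for x using z by auto
      qed
      then show ?thesis by simp
    qed
    have "integral\<^sup>L lborel g = integral\<^sup>L (lborel \<Otimes>\<^sub>M lborel) (case_prod (\<lambda>x y. g (x,y)))"
      by (simp add: lborel_prod)
    also have "\<dots> = (\<integral>y. (\<integral>x. g (x,y) \<partial>lborel) \<partial>lborel)"
      by (rule lborel_pair.integral_snd[symmetric]) (use intP in simp)
    also have "\<dots> = 0" by (simp add: inner)
    finally show ?thesis .
  next
    case False
    then have True: "i = (0,1)" using i by (auto simp: Basis_real_prod)
    have inner: "(\<integral>y. g (x,y) \<partial>lborel) = 0" for x
    proof -
      have "integrable lborel (\<lambda>y. g (x,y)) \<and> integral\<^sup>L lborel (\<lambda>y. g (x,y)) = 0"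
      proof (rule ibp_core1[of "\<lambda>y. w (x,y)" _ C D])
        show "((\<lambda>y. w (x,y)) has_real_derivative g (x,y)) (at y)" for y
          using sec2[OF d] True by (simp add: g_def)
        show "continuous_on UNIV (\<lambda>y. g (x,y))"
          by (rule continuous_on_compose2[OF cg]) (auto intro: continuous_intros)
        show "y \<notin> {C<..<D} \<Longrightarrow> w (x,y) = 0" for y using z by auto
      qed
      then show ?thesis by simp
    qed
    have "integral\<^sup>L lborel g = integral\<^sup>L (lborel \<Otimes>\<^sub>M lborel) g"
      by (simp add: lborel_prod)
    also have "\<dots> = (\<integral>x. (\<integral>y. g (x,y) \<partial>lborel) \<partial>lborel)"
      by (rule lborel_pair.integral_fst'[symmetric]) (use intP in simp)
    also have "\<dots> = 0" by (simp add: inner)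
    finally show ?thesis .
  qed
  with int show ?thesis by (simp add: g_def[abs_def])
qed

lemma integrable_cont_compact:
  fixes f :: "'a::euclidean_space \<Rightarrow> real"
  assumes c: "continuous_on UNIV f" and K: "compact K" and z: "\<And>x. x \<notin> K \<Longrightarrow> f x = 0"
  shows "integrable lborel f"
proof -
  have eq: "f = (\<lambda>x. indicator K x *\<^sub>R f x)"
  proof (rule ext)
    fix x show "f x = indicator K x *\<^sub>R f x" by (cases "x \<in> K") (simp_all add: z)
  qed
  show ?thesis by (subst eq) (rule borel_integrable_compact[OF K continuous_on_subset[OF c]], auto)
qed

lemma set_integral_full:
  fixes f :: "'a::euclidean_space \<Rightarrow> real"
  assumes z: "\<And>x. x \<notin> U \<Longrightarrow> f x = 0"
  shows "(LINT z:U|lborel. f z) = integral\<^sup>L lborel f"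
proof -
  have "(\<lambda>x. indicator U x *\<^sub>R f x) = f"
  proof (rule ext)
    fix x show "indicator U x *\<^sub>R f x = f x" by (cases "x \<in> U") (simp_all add: z)
  qed
  then show ?thesis by (simp add: set_lebesgue_integral_def)
qed

lemma L2_cont:
  fixes u :: "'a::euclidean_space \<Rightarrow> real"
  assumes c: "continuous_on UNIV u" and b: "bounded U" and U: "U \<in> sets lborel"
  shows "L2 U u"
proof -
  have m: "u \<in> borel_measurable borel" using borel_measurable_continuous_onI[OF c] .
  have m2: "u \<in> borel_measurable lborel" using m by simp
  have "set_borel_measurable lborel U u"
    unfolding set_borel_measurable_def
    by (intro borel_measurable_scaleR borel_measurable_indicator m2 U)
  moreover have "set_integrable lborel (closure U) (\<lambda>z. (u z)\<^sup>2)"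
    unfolding set_integrable_def
  proof (rule borel_integrable_compact)
    show "compact (closure U)" using b by (simp add: compact_closure)
    show "continuous_on (closure U) (\<lambda>z. (u z)\<^sup>2)"
      by (intro continuous_intros continuous_on_subset[OF c]) auto
  qed
  then have "set_integrable lborel U (\<lambda>z. (u z)\<^sup>2)"
    by (rule set_integrable_subset) (use U closure_subset in auto)
  ultimately show ?thesis by (simp add: L2_def)
qed

definition core_prop :: "'a::euclidean_space \<Rightarrow> bool" where
  "core_prop i \<longleftrightarrow> (\<forall>w::'a \<Rightarrow> real. (\<forall>z. w differentiable (at z)) \<longrightarrow>
      continuous_on UNIV (\<lambda>z. frechet_derivative w (at z) i) \<longrightarrow>
      (\<exists>K. compact K \<and> (\<forall>z. z \<notin> K \<longrightarrow> w z = 0)) \<longrightarrow>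
      integral\<^sup>L lborel (\<lambda>z. frechet_derivative w (at z) i) = 0)"

lemma test_fun_facts:
  assumes "test_fun U \<phi>"
  shows "compact (closure {x. \<phi> x \<noteq> 0})" "closure {x. \<phi> x \<noteq> 0} \<subseteq> U"
    "\<And>x. x \<notin> closure {x. \<phi> x \<noteq> 0} \<Longrightarrow> \<phi> x = 0"
    "\<And>x v. x \<notin> closure {x. \<phi> x \<noteq> 0} \<Longrightarrow> frechet_derivative \<phi> (at x) v = 0"
    "smooth \<phi>"
proof -
  show c: "compact (closure {x. \<phi> x \<noteq> 0})" "closure {x. \<phi> x \<noteq> 0} \<subseteq> U" "smooth \<phi>"
    using assms by (auto simp: test_fun_def)
  show z: "\<phi> x = 0" if "x \<notin> closure {x. \<phi> x \<noteq> 0}" for x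
  proof (rule ccontr)
    assume "\<phi> x \<noteq> 0"
    then have "x \<in> closure {x. \<phi> x \<noteq> 0}" by (intro subsetD[OF closure_subset]) simp
    then show False using that by contradiction
  qed
  show "frechet_derivative \<phi> (at x) v = 0" if "x \<notin> closure {x. \<phi> x \<noteq> 0}" for x v
  proof -
    have "frechet_derivative \<phi> (at x) = (\<lambda>h. 0)"
    proof (rule frechet_zero_open[of "- closure {x. \<phi> x \<noteq> 0}"])
      show "open (- closure {x. \<phi> x \<noteq> 0})" by auto
      show "x \<in> - closure {x. \<phi> x \<noteq> 0}" using that by simp
      fix y assume "y \<in> - closure {x. \<phi> x \<noteq> 0}"
      then show "\<phi> y = 0" using z[of y] by simp
    qed
    then show ?thesis by simp
  qed
qed

lemma ibp_U:
  fixes u \<phi> :: "'a::euclidean_space \<Rightarrow> real"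
  assumes su: "smooth u" and t: "test_fun U \<phi>" and core: "core_prop i"
  shows "(LINT z:U|lborel. u z * frechet_derivative \<phi> (at z) i) =
         - (LINT z:U|lborel. frechet_derivative u (at z) i * \<phi> z)"
proof -
  define K where "K = closure {x. \<phi> x \<noteq> 0}"
  have K: "compact K" "K \<subseteq> U" "\<And>x. x \<notin> K \<Longrightarrow> \<phi> x = 0"
    "\<And>x v. x \<notin> K \<Longrightarrow> frechet_derivative \<phi> (at x) v = 0" "smooth \<phi>"
    unfolding K_def
    by (rule test_fun_facts(1)[OF t], rule test_fun_facts(2)[OF t], erule test_fun_facts(3)[OF t],
        erule test_fun_facts(4)[OF t], rule test_fun_facts(5)[OF t])
  define w where "w z = u z * \<phi> z" for z
  have dw: "(w has_derivative (\<lambda>h. u z * frechet_derivative \<phi> (at z) h + frechet_derivative u (at z) h * \<phi> z)) (at z)" for z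
    unfolding w_def
    by (rule has_derivative_mult[OF frechet_derivative_works[THEN iffD1, OF smooth_facts(1)[OF su]]
                                 frechet_derivative_works[THEN iffD1, OF smooth_facts(1)[OF K(5)]]])
  have fw: "frechet_derivative w (at z) i = u z * frechet_derivative \<phi> (at z) i + frechet_derivative u (at z) i * \<phi> z" for z
    using fun_cong[OF frechet_derivative_at[OF dw[of z]], of i] by simp
  have c1: "continuous_on UNIV (\<lambda>z. u z * frechet_derivative \<phi> (at z) i)"
    by (intro continuous_intros smooth_facts[OF su] smooth_facts[OF K(5)])
  have c2: "continuous_on UNIV (\<lambda>z. frechet_derivative u (at z) i * \<phi> z)"
    by (intro continuous_intros smooth_facts[OF su] smooth_facts[OF K(5)])
  have z1: "u z * frechet_derivative \<phi> (at z) i = 0" if "z \<notin> K" for z using K(4) that by simp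
  have z2: "frechet_derivative u (at z) i * \<phi> z = 0" if "z \<notin> K" for z using K(3) that by simp
  have i1: "integrable lborel (\<lambda>z. u z * frechet_derivative \<phi> (at z) i)"
    by (rule integrable_cont_compact[OF c1 K(1) z1])
  have i2: "integrable lborel (\<lambda>z. frechet_derivative u (at z) i * \<phi> z)"
    by (rule integrable_cont_compact[OF c2 K(1) z2])
  have "integral\<^sup>L lborel (\<lambda>z. frechet_derivative w (at z) i) = 0"
    using core unfolding core_prop_def
  proof (elim allE impE)
    show "\<forall>z. w differentiable (at z)" using dw differentiable_def by blast
    show "continuous_on UNIV (\<lambda>z. frechet_derivative w (at z) i)"
      unfolding fw by (intro continuous_intros c1 c2)
    show "\<exists>K. compact K \<and> (\<forall>z. z \<notin> K \<longrightarrow> w z = 0)"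
      using K(1,3) by (auto simp: w_def)
  qed
  then have "integral\<^sup>L lborel (\<lambda>z. u z * frechet_derivative \<phi> (at z) i) +
             integral\<^sup>L lborel (\<lambda>z. frechet_derivative u (at z) i * \<phi> z) = 0"
    unfolding fw using Bochner_Integration.integral_add[OF i1 i2] by simp
  moreover have "(LINT z:U|lborel. u z * frechet_derivative \<phi> (at z) i) = integral\<^sup>L lborel (\<lambda>z. u z * frechet_derivative \<phi> (at z) i)"
    by (rule set_integral_full) (use z1 K(2) in auto)
  moreover have "(LINT z:U|lborel. frechet_derivative u (at z) i * \<phi> z) = integral\<^sup>L lborel (\<lambda>z. frechet_derivative u (at z) i * \<phi> z)"
    by (rule set_integral_full) (use z2 K(2) in auto)
  ultimately show ?thesis by linarith
qed

lemma grad_inner: "i \<in> Basis \<Longrightarrow> grad u z \<bullet> i = frechet_derivative u (at z) i"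
  unfolding grad_def by (rule inner_sum_left_Basis)

lemma weak_grad_smooth:
  fixes u :: "'a::euclidean_space \<Rightarrow> real"
  assumes su: "smooth u" and U: "open U" "bounded U" and core: "\<And>i::'a. i \<in> Basis \<Longrightarrow> core_prop i"
  shows "weak_grad U u (grad u)"
proof -
  have Us: "U \<in> sets lborel" using U by simp
  have "L2 U u" by (rule L2_cont[OF smooth_facts(2)[OF su] U(2) Us])
  moreover have "L2 U (\<lambda>z. grad u z \<bullet> i)" if "i \<in> Basis" for i
    using L2_cont[OF smooth_facts(3)[OF su] U(2) Us] that by (simp add: grad_inner)
  moreover have "(LINT z:U|lborel. u z * frechet_derivative \<phi> (at z) i) = - (LINT z:U|lborel. (grad u z \<bullet> i) * \<phi> z)"
    if t: "test_fun U \<phi>" and i: "i \<in> Basis" for \<phi> and i :: 'a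
  proof -
    have ci: "core_prop i" using core i by blast
    show ?thesis using ibp_U[OF su t ci] i by (simp add: grad_inner)
  qed
  ultimately show ?thesis by (auto simp: weak_grad_def)
qed

lemma H10_test:
  fixes u :: "'a::euclidean_space \<Rightarrow> real"
  assumes t: "test_fun U u" and U: "open U" "bounded U" and core: "\<And>i::'a. i \<in> Basis \<Longrightarrow> core_prop i"
  shows "H10 U u"
proof -
  have su: "smooth u" using t by (simp add: test_fun_def)
  show ?thesis unfolding H10_def
  proof (intro exI conjI)
    show "weak_grad U u (grad u)" by (rule weak_grad_smooth[OF su U core])
    show "\<forall>n. test_fun U ((\<lambda>n. u) n)" using t by simp
    show "(\<lambda>n. LINT z:U|lborel. ((\<lambda>n. u) n z - u z)\<^sup>2) \<longlonglongrightarrow> 0" by simp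
    show "(\<lambda>n. LINT z:U|lborel. (norm (grad ((\<lambda>n. u) n) z - grad u z))\<^sup>2) \<longlonglongrightarrow> 0" by simp
  qed
qed

lemma norm_fst_le': "\<bar>fst z\<bar> \<le> norm (z :: real \<times> real)"
  by (cases z) (simp add: norm_Pair real_sqrt_ge_abs1)
lemma norm_snd_le': "\<bar>snd z\<bar> \<le> norm (z :: real \<times> real)"
  by (cases z) (simp add: norm_Pair real_sqrt_ge_abs2)

lemma core_real: "core_prop (i::real)" if "i \<in> Basis"
proof -
  have i: "i = 1" using that by simp
  show ?thesis unfolding core_prop_def
  proof (intro allI impI)
    fix w :: "real \<Rightarrow> real"
    assume d: "\<forall>z. w differentiable (at z)" and c: "continuous_on UNIV (\<lambda>z. frechet_derivative w (at z) i)"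
      and "\<exists>K. compact K \<and> (\<forall>z. z \<notin> K \<longrightarrow> w z = 0)"
    then obtain K where K: "compact K" "\<And>z. z \<notin> K \<Longrightarrow> w z = 0" by blast
    obtain R where R: "\<And>x. x \<in> K \<Longrightarrow> norm x \<le> R" using compact_imp_bounded[OF K(1)] bounded_iff by blast
    have dd: "(w has_real_derivative frechet_derivative w (at x) i) (at x)" for x
    proof -
      let ?F = "frechet_derivative w (at x)"
      have dw: "(w has_derivative ?F) (at x)" using d frechet_derivative_works by blast
      have "?F = (\<lambda>h. ?F i * h)"
      proof
        fix h :: real
        have "?F h = ?F (h *\<^sub>R 1)" by simp
        also have "\<dots> = h *\<^sub>R ?F 1" by (rule linear_cmul[OF has_derivative_linear[OF dw]])
        finally show "?F h = ?F i * h" using i by simp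
      qed
      with dw show ?thesis by (simp add: has_field_derivative_def)
    qed
    have "integrable lborel (\<lambda>z. frechet_derivative w (at z) i) \<and> integral\<^sup>L lborel (\<lambda>z. frechet_derivative w (at z) i) = 0"
    proof (rule ibp_core1[OF dd c, of "-R-1" "R+1"])
      fix x assume "x \<notin> {-R-1<..<R+1}"
      then have "x \<notin> K" using R by force
      then show "w x = 0" by (rule K(2))
    qed
    then show "integral\<^sup>L lborel (\<lambda>z. frechet_derivative w (at z) i) = 0" by simp
  qed
qed

lemma core_prod: "core_prop (i::real\<times>real)" if i: "i \<in> Basis"
  unfolding core_prop_def
proof (intro allI impI)
  fix w :: "real \<times> real \<Rightarrow> real"
  assume d: "\<forall>z. w differentiable (at z)" and c: "continuous_on UNIV (\<lambda>z. frechet_derivative w (at z) i)"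
    and "\<exists>K. compact K \<and> (\<forall>z. z \<notin> K \<longrightarrow> w z = 0)"
  then obtain K where K: "compact K" "\<And>z. z \<notin> K \<Longrightarrow> w z = 0" by blast
  obtain R where R: "\<And>x. x \<in> K \<Longrightarrow> norm x \<le> R" using compact_imp_bounded[OF K(1)] bounded_iff by blast
  have "integrable lborel (\<lambda>z. frechet_derivative w (at z) i) \<and> integral\<^sup>L lborel (\<lambda>z. frechet_derivative w (at z) i) = 0"
  proof (rule ibp_core2[of w i "-R-1" "R+1" "-R-1" "R+1"])
    show "\<And>z. w differentiable (at z)" using d by blast
    show "continuous_on UNIV (\<lambda>z. frechet_derivative w (at z) i)" by (rule c)
    show "i \<in> Basis" by (rule i)
    fix x y assume "x \<notin> {-R-1<..<R+1} \<or> y \<notin> {-R-1<..<R+1}"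
    then have "(x,y) \<notin> K" using R norm_fst_le'[of "(x,y)"] norm_snd_le'[of "(x,y)"] by force
    then show "w (x,y) = 0" by (rule K(2))
  qed
  then show "integral\<^sup>L lborel (\<lambda>z. frechet_derivative w (at z) i) = 0" by simp
qed

lemma box_zero_AE:
  fixes f :: "'a::euclidean_space \<Rightarrow> real"
  assumes fi: "integrable lborel f" and bx: "\<And>a b. (LINT x:box a b|lborel. f x) = 0"
    and tot: "integral\<^sup>L lborel f = 0"
  shows "AE x in lborel. f x = 0"
proof (rule density_unique_real[OF fi integrable_zero])
  fix A :: "'a set" assume A: "A \<in> sets lborel"
  let ?G = "range (\<lambda>(a, b). box a b :: 'a set)"
  have st: "Int_stable ?G" by (auto simp: Int_stable_def box_Int_box)
  have sb: "?G \<subseteq> Pow UNIV" by auto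
  have As: "A \<in> sigma_sets UNIV ?G" using A unfolding sets_lborel borel_eq_box by simp
  have "(LINT x:A|lborel. f x) = 0"
    using st sb As
  proof (induction rule: sigma_sets_induct_disjoint)
    case (basic A)
    then show ?case using bx by auto
  next
    case empty
    then show ?case by (simp add: set_lebesgue_integral_def)
  next
    case (compl A)
    then have [measurable]: "A \<in> sets borel" by (simp add: borel_eq_box)
    have "(LINT x:(UNIV - A)|lborel. f x) = integral\<^sup>L lborel (\<lambda>x. f x - indicator A x *\<^sub>R f x)"
      unfolding set_lebesgue_integral_def
      by (rule Bochner_Integration.integral_cong) (auto simp: indicator_def)
    also have "\<dots> = integral\<^sup>L lborel f - (LINT x:A|lborel. f x)"
      unfolding set_lebesgue_integral_def
      by (rule Bochner_Integration.integral_diff[OF fi integrable_mult_indicator]) (use fi in simp_all)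
    finally show ?case using compl tot by simp
  next
    case (union F)
    then have [measurable]: "\<And>i. F i \<in> sets borel" by (simp add: borel_eq_box subset_eq)
    have "(LINT x:(\<Union>i. F i)|lborel. f x) = (\<Sum>i. (LINT x:(F i)|lborel. f x))"
    proof (rule lebesgue_integral_countable_add)
      show "\<And>i. F i \<in> sets lborel" by simp
      show "\<And>i j. i \<noteq> j \<Longrightarrow> F i \<inter> F j = {}" using union(1) by (auto simp: disjoint_family_on_def)
      show "set_integrable lborel (\<Union>i. F i) f"
        unfolding set_integrable_def by (rule integrable_mult_indicator) (use fi in simp_all)
    qed
    then show ?case using union by simp
  qed
  then show "(LINT x:A|lborel. f x) = (LINT x:A|lborel. 0)" by (simp add: set_lebesgue_integral_def)
qed

lemma AE_zero_open:
  fixes h :: "'a::euclidean_space \<Rightarrow> real"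
  assumes U: "open U" and hi: "set_integrable lborel U h"
    and bx: "\<And>a b. box a b \<subseteq> U \<Longrightarrow> (LINT z:U|lborel. h z * indicator (box a b) z) = 0"
  shows "AE z in lborel. z \<in> U \<longrightarrow> h z = 0"
proof -
  obtain D where D: "countable D" "D \<subseteq> Pow U" "\<And>X. X \<in> D \<Longrightarrow> \<exists>a b. X = box a b" "\<Union>D = U"
    using open_countable_Union_open_box[OF U] by metis
  have hU: "integrable lborel (\<lambda>z. indicator U z *\<^sub>R h z)" using hi by (simp add: set_integrable_def)
  have one: "AE z in lborel. z \<in> X \<longrightarrow> h z = 0" if X: "X \<in> D" for X
  proof -
    obtain a0 b0 where X0: "X = box a0 b0" using D(3)[OF X] by blast
    have XU: "X \<subseteq> U" using D(2) X by blast
    define f where "f z = indicator X z * h z" for z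
    have f_eq: "f = (\<lambda>z. indicator X z *\<^sub>R (indicator U z *\<^sub>R h z))"
    proof (rule ext)
      fix z show "f z = indicator X z *\<^sub>R (indicator U z *\<^sub>R h z)"
        using XU by (cases "z \<in> X") (auto simp: f_def indicator_def)
    qed
    have fi: "integrable lborel f"
      unfolding f_eq by (rule integrable_mult_indicator[OF _ hU]) (simp add: X0)
    have "AE z in lborel. f z = 0"
    proof (rule box_zero_AE[OF fi])
      fix a b :: 'a
      define c :: 'a where "c = (\<Sum>i\<in>Basis. max (a\<bullet>i) (a0\<bullet>i) *\<^sub>R i)"
      define d :: 'a where "d = (\<Sum>i\<in>Basis. min (b\<bullet>i) (b0\<bullet>i) *\<^sub>R i)"
      have cd: "box a b \<inter> X = box c d" unfolding X0 c_def d_def by (rule box_Int_box)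
      have "box c d \<subseteq> U" using cd XU by blast
      then have "(LINT z:U|lborel. h z * indicator (box c d) z) = 0" by (rule bx)
      moreover have "(LINT x:box a b|lborel. f x) = (LINT z:U|lborel. h z * indicator (box c d) z)"
        unfolding set_lebesgue_integral_def
      proof (rule Bochner_Integration.integral_cong[OF refl])
        fix z
        have "z \<in> box c d \<longleftrightarrow> z \<in> box a b \<and> z \<in> X" using cd by blast
        then show "indicator (box a b) z *\<^sub>R f z = indicator U z *\<^sub>R (h z * indicator (box c d) z)"
          using XU by (auto simp: f_def indicator_def)
      qed
      ultimately show "(LINT x:box a b|lborel. f x) = 0" by simp
    next
      have "(LINT z:U|lborel. h z * indicator (box a0 b0) z) = 0" using XU X0 by (intro bx) simp
      moreover have "integral\<^sup>L lborel f = (LINT z:U|lborel. h z * indicator (box a0 b0) z)"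
        unfolding set_lebesgue_integral_def
      proof (rule Bochner_Integration.integral_cong[OF refl])
        fix z show "f z = indicator U z *\<^sub>R (h z * indicator (box a0 b0) z)"
          using XU X0 by (auto simp: f_def indicator_def)
      qed
      ultimately show "integral\<^sup>L lborel f = 0" by simp
    qed
    then show ?thesis by eventually_elim (auto simp: f_def indicator_def)
  qed
  have "AE z in lborel. \<forall>X\<in>D. z \<in> X \<longrightarrow> h z = 0"
    by (subst AE_ball_countable[OF D(1)]) (use one in blast)
  then show ?thesis
  proof eventually_elim
    case (elim z)
    show ?case
    proof
      assume "z \<in> U"
      then obtain X where "X \<in> D" "z \<in> X" using D(4) by blast
      then show "h z = 0" using elim by blast
    qed
  qed
qed

lemma dct_U:
  fixes h :: "'a::euclidean_space \<Rightarrow> real"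
  assumes hi: "set_integrable lborel U h" and gm: "\<And>n. g n \<in> borel_measurable lborel"
    and Gm: "G \<in> borel_measurable lborel"
    and gb: "\<And>n z. \<bar>g n z\<bar> \<le> 1" and gl: "\<And>z. (\<lambda>n. g n z) \<longlonglongrightarrow> G z"
  shows "(\<lambda>n. LINT z:U|lborel. h z * g n z) \<longlonglongrightarrow> (LINT z:U|lborel. h z * G z)"
proof -
  define H where "H z = indicator U z *\<^sub>R h z" for z
  have Hi: "integrable lborel H" using hi by (simp add: set_integrable_def H_def[abs_def])
  have Hm: "H \<in> borel_measurable lborel" using Hi by (rule borel_measurable_integrable)
  have e1: "(\<lambda>z. indicator U z *\<^sub>R (h z * g n z)) = (\<lambda>z. H z * g n z)" for n
    by (auto simp: H_def)
  have e2: "(\<lambda>z. indicator U z *\<^sub>R (h z * G z)) = (\<lambda>z. H z * G z)"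
    by (auto simp: H_def)
  have "(\<lambda>n. integral\<^sup>L lborel (\<lambda>z. H z * g n z)) \<longlonglongrightarrow> integral\<^sup>L lborel (\<lambda>z. H z * G z)"
  proof (rule integral_dominated_convergence[where w="\<lambda>z. norm (H z)"])
    show "(\<lambda>z. H z * G z) \<in> borel_measurable lborel" using Hm Gm by (rule borel_measurable_times)
    show "(\<lambda>z. H z * g n z) \<in> borel_measurable lborel" for n using Hm gm by (rule borel_measurable_times)
    show "integrable lborel (\<lambda>z. norm (H z))" using Hi by (rule integrable_norm)
    show "AE z in lborel. (\<lambda>n. H z * g n z) \<longlonglongrightarrow> H z * G z"
      by (intro AE_I2 tendsto_mult_left gl)
    show "AE z in lborel. norm (H z * g n z) \<le> norm (H z)" for n
    proof (intro AE_I2)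
      fix z
      have "\<bar>H z\<bar> * \<bar>g n z\<bar> \<le> \<bar>H z\<bar> * 1" by (rule mult_left_mono[OF gb]) simp
      then show "norm (H z * g n z) \<le> norm (H z)" by (simp add: abs_mult)
    qed
  qed
  then show ?thesis unfolding set_lebesgue_integral_def e1 e2 .
qed

lemma mem_box_pair: fixes x y a1 a2 b1 b2 :: real shows "(x,y) \<in> box (a1,a2) (b1,b2) \<longleftrightarrow> a1 < x \<and> x < b1 \<and> a2 < y \<and> y < b2"
  by (auto simp: mem_box Basis_real_prod)

lemma ind_box_pair: fixes x y a1 a2 b1 b2 :: real shows "indicator (box (a1,a2) (b1,b2)) (x,y) = indicator {a1<..<b1} x * (indicator {a2<..<b2} y :: real)"
  by (auto simp: mem_box_pair indicator_def)

lemma meas_cont: "continuous_on UNIV (f::'a::euclidean_space \<Rightarrow> real) \<Longrightarrow> f \<in> borel_measurable lborel"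
  using borel_measurable_continuous_onI by simp

lemma FL_cbox:
  fixes h :: "real \<times> real \<Rightarrow> real"
  assumes hi: "set_integrable lborel (X \<times> Y) h"
    and orth: "\<And>r s. sm r \<Longrightarrow> sm s \<Longrightarrow> test_fun X r \<Longrightarrow> test_fun Y s \<Longrightarrow>
               (LINT z:X \<times> Y|lborel. h z * tensor r s z) = 0"
    and sub: "cbox (a1,a2) (b1,b2) \<subseteq> X \<times> Y"
  shows "(LINT z:X \<times> Y|lborel. h z * indicator (box (a1,a2) (b1,b2)) z) = 0"
proof (cases "a1 < b1 \<and> a2 < b2")
  case False
  have "indicator (box (a1,a2) (b1,b2)) z = (0::real)" for z
    using False by (cases z) (auto simp: mem_box_pair indicator_def)
  then show ?thesis by (simp add: set_lebesgue_integral_def)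
next
  case True
  have "{a1..b1} \<times> {a2..b2} \<subseteq> X \<times> Y" using sub by (simp add: cbox_Pair_eq)
  then have XY: "{a1..b1} \<subseteq> X" "{a2..b2} \<subseteq> Y" using True by (auto simp: times_subset_iff)
  define g where "g n = tensor (rn a1 b1 n) (rn a2 b2 n)" for n
  have "(\<lambda>n. LINT z:X \<times> Y|lborel. h z * g n z) \<longlonglongrightarrow> (LINT z:X \<times> Y|lborel. h z * indicator (box (a1,a2) (b1,b2)) z)"
  proof (rule dct_U[OF hi])
    show "g n \<in> borel_measurable lborel" for n
      unfolding g_def by (rule meas_cont[OF smooth_facts(2)[OF smooth_tensor[OF sm_rn sm_rn]]])
    show "indicator (box (a1,a2) (b1,b2)) \<in> borel_measurable lborel" by simp
    show "\<bar>g n z\<bar> \<le> 1" for n z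
    proof -
      have "\<bar>rn a1 b1 n (fst z)\<bar> * \<bar>rn a2 b2 n (snd z)\<bar> \<le> 1"
        by (rule mult_le_one) (auto simp: rn_bound)
      then show ?thesis by (cases z) (simp add: g_def tensor_def abs_mult)
    qed
    show "(\<lambda>n. g n z) \<longlonglongrightarrow> indicator (box (a1,a2) (b1,b2)) z" for z
    proof -
      obtain x y where z: "z = (x,y)" by force
      have "(\<lambda>n. rn a1 b1 n x * rn a2 b2 n y) \<longlonglongrightarrow> indicator {a1<..<b1} x * indicator {a2<..<b2} y"
        by (intro tendsto_mult rn_lim)
      then show ?thesis by (simp add: z g_def tensor_def ind_box_pair)
    qed
  qed
  moreover have "(LINT z:X \<times> Y|lborel. h z * g n z) = 0" for n
    unfolding g_def by (rule orth[OF sm_rn sm_rn test_fun_rn[OF XY(1)] test_fun_rn[OF XY(2)]])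
  ultimately have "(\<lambda>n. 0::real) \<longlonglongrightarrow> (LINT z:X \<times> Y|lborel. h z * indicator (box (a1,a2) (b1,b2)) z)"
    by simp
  from LIMSEQ_unique[OF this tendsto_const[of 0]] show ?thesis by simp
qed

lemma FL_box:
  fixes h :: "real \<times> real \<Rightarrow> real"
  assumes hi: "set_integrable lborel (X \<times> Y) h"
    and orth: "\<And>r s. sm r \<Longrightarrow> sm s \<Longrightarrow> test_fun X r \<Longrightarrow> test_fun Y s \<Longrightarrow>
               (LINT z:X \<times> Y|lborel. h z * tensor r s z) = 0"
    and sub: "box (a1,a2) (b1,b2) \<subseteq> X \<times> Y"
  shows "(LINT z:X \<times> Y|lborel. h z * indicator (box (a1,a2) (b1,b2)) z) = 0"
proof -
  define e where "e n = inverse (real (Suc n))" for n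
  have epos: "0 < e n" for n by (simp add: e_def)
  define g :: "nat \<Rightarrow> real \<times> real \<Rightarrow> real" where "g n = indicator (box (a1 + e n, a2 + e n) (b1 - e n, b2 - e n))" for n
  have "(\<lambda>n. LINT z:X \<times> Y|lborel. h z * g n z) \<longlonglongrightarrow> (LINT z:X \<times> Y|lborel. h z * indicator (box (a1,a2) (b1,b2)) z)"
  proof (rule dct_U[OF hi])
    show "g n \<in> borel_measurable lborel" for n unfolding g_def by simp
    show "indicator (box (a1,a2) (b1,b2)) \<in> borel_measurable lborel" by simp
    show "\<bar>g n z\<bar> \<le> 1" for n z by (simp add: g_def indicator_def)
    show "(\<lambda>n. g n z) \<longlonglongrightarrow> indicator (box (a1,a2) (b1,b2)) z" for z
    proof -
      obtain x y where z: "z = (x,y)" by force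
      show ?thesis
      proof (cases "a1 < x \<and> x < b1 \<and> a2 < y \<and> y < b2")
        case True
        define \<delta> where "\<delta> = min (min (x - a1) (b1 - x)) (min (y - a2) (b2 - y))"
        have "0 < \<delta>" using True by (simp add: \<delta>_def)
        then obtain N where N: "0 < N" "inverse (real N) < \<delta>" using ex_inverse_of_nat_less by blast
        have "g n z = 1" if "n \<ge> N" for n
        proof -
          have "e n \<le> inverse (real N)" unfolding e_def
            using that N(1) by (intro le_imp_inverse_le) auto
          then have "e n < \<delta>" using N(2) by linarith
          then show ?thesis by (auto simp: g_def z mem_box_pair \<delta>_def indicator_def)
        qed
        then have "eventually (\<lambda>n. g n z = 1) sequentially" by (auto simp: eventually_sequentially)
        then have "(\<lambda>n. g n z) \<longlonglongrightarrow> 1" by (rule tendsto_eventually)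
        then show ?thesis using True by (simp add: z mem_box_pair indicator_def)
      next
        case False
        have "g n z = 0" for n using False epos[of n] by (auto simp: g_def z mem_box_pair indicator_def)
        then show ?thesis using False by (auto simp: z mem_box_pair indicator_def)
      qed
    qed
  qed
  moreover have "(LINT z:X \<times> Y|lborel. h z * g n z) = 0" for n
    unfolding g_def
  proof (rule FL_cbox[OF hi orth])
    show "cbox (a1 + e n, a2 + e n) (b1 - e n, b2 - e n) \<subseteq> X \<times> Y"
    proof
      fix z assume "z \<in> cbox (a1 + e n, a2 + e n) (b1 - e n, b2 - e n)"
      then have "z \<in> box (a1,a2) (b1,b2)" using epos[of n] by (cases z) (auto simp: mem_box_pair cbox_Pair_eq)
      then show "z \<in> X \<times> Y" using sub by blast
    qed
  qed
  ultimately have "(\<lambda>n. 0::real) \<longlonglongrightarrow> (LINT z:X \<times> Y|lborel. h z * indicator (box (a1,a2) (b1,b2)) z)"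
    by simp
  from LIMSEQ_unique[OF this tendsto_const[of 0]] show ?thesis by simp
qed

lemma FL_tensor:
  fixes h :: "real \<times> real \<Rightarrow> real"
  assumes XY: "open X" "open Y" and hi: "set_integrable lborel (X \<times> Y) h"
    and orth: "\<And>r s. sm r \<Longrightarrow> sm s \<Longrightarrow> test_fun X r \<Longrightarrow> test_fun Y s \<Longrightarrow>
               (LINT z:X \<times> Y|lborel. h z * tensor r s z) = 0"
  shows "AE z in lborel. z \<in> X \<times> Y \<longrightarrow> h z = 0"
proof (rule AE_zero_open[OF open_Times[OF XY] hi])
  fix a b :: "real \<times> real" assume "box a b \<subseteq> X \<times> Y"
  then show "(LINT z:X \<times> Y|lborel. h z * indicator (box a b) z) = 0"
    using FL_box[OF hi orth, of "fst a" "snd a" "fst b" "snd b"] by simp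
qed

lemma abs_le_sq: "\<bar>x::real\<bar> \<le> 1 + x\<^sup>2"
proof -
  have "0 \<le> (\<bar>x\<bar> - 1)\<^sup>2" by simp
  also have "(\<bar>x\<bar> - 1)\<^sup>2 = x\<^sup>2 - 2 * \<bar>x\<bar> + 1" by (simp add: power2_diff)
  finally show ?thesis by (simp add: zero_le_power2[of x] add_nonneg_nonneg) 
qed

lemma L2_integrable:
  fixes u :: "'a::euclidean_space \<Rightarrow> real"
  assumes b: "bounded U" and U: "U \<in> sets lborel" and L: "L2 U u"
  shows "set_integrable lborel U u"
proof -
  have m: "(\<lambda>z. indicator U z *\<^sub>R u z) \<in> borel_measurable lborel"
    using L by (simp add: L2_def set_borel_measurable_def)
  have i1: "integrable lborel (indicator U :: 'a \<Rightarrow> real)"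
    by (rule integrable_real_indicator[OF U emeasure_bounded_finite[OF b]])
  have i2: "integrable lborel (\<lambda>z. indicator U z *\<^sub>R (u z)\<^sup>2)"
    using L by (simp add: L2_def set_integrable_def)
  have i3: "integrable lborel (\<lambda>z. indicator U z + indicator U z *\<^sub>R (u z)\<^sup>2)"
    by (rule Bochner_Integration.integrable_add[OF i1 i2])
  show ?thesis unfolding set_integrable_def
  proof (rule Bochner_Integration.integrable_bound[OF i3 m])
    show "AE z in lborel. norm (indicator U z *\<^sub>R u z) \<le> norm (indicator U z + indicator U z *\<^sub>R (u z)\<^sup>2)"
    proof (rule AE_I2)
      fix z
      show "norm (indicator U z *\<^sub>R u z) \<le> norm (indicator U z + indicator U z *\<^sub>R (u z)\<^sup>2)"
        using abs_le_sq[of "u z"] by (cases "z \<in> U") (simp_all add: indicator_def)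
    qed
  qed
qed

lemma test_bounded:
  assumes t: "test_fun U \<phi>"
  shows "\<exists>M. \<forall>z. \<bar>\<phi> z\<bar> \<le> M"
proof -
  define K where "K = closure {x. \<phi> x \<noteq> 0}"
  have K: "compact K" unfolding K_def by (rule test_fun_facts(1)[OF t])
  have c: "continuous_on K \<phi>"
    by (rule continuous_on_subset[OF smooth_facts(2)[OF test_fun_facts(5)[OF t]]]) simp
  have "bounded (\<phi> ` K)" by (rule compact_imp_bounded[OF compact_continuous_image[OF c K]])
  then obtain M where M: "\<forall>v\<in>\<phi> ` K. norm v \<le> M" by (auto simp: bounded_iff)
  have "\<bar>\<phi> z\<bar> \<le> max M 0" for z
  proof (cases "z \<in> K")
    case True then have "\<phi> z \<in> \<phi> ` K" by simp
    then have "norm (\<phi> z) \<le> M" using M by blast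
    then show ?thesis by simp
  next
    case False then have "\<phi> z = 0" unfolding K_def by (rule test_fun_facts(3)[OF t])
    then show ?thesis by simp
  qed
  then show ?thesis by (intro exI[of _ "max M 0"]) simp
qed

lemma set_integrable_mult_bounded:
  fixes h \<phi> :: "'a::euclidean_space \<Rightarrow> real"
  assumes hi: "set_integrable lborel U h" and m: "\<phi> \<in> borel_measurable lborel" and b: "\<And>z. \<bar>\<phi> z\<bar> \<le> M"
  shows "set_integrable lborel U (\<lambda>z. h z * \<phi> z)"
proof -
  define H where "H z = indicator U z *\<^sub>R h z" for z
  have Hi: "integrable lborel H" using hi by (simp add: set_integrable_def H_def[abs_def])
  have Hm: "H \<in> borel_measurable lborel" using Hi by (rule borel_measurable_integrable)
  have eq: "(\<lambda>z. indicator U z *\<^sub>R (h z * \<phi> z)) = (\<lambda>z. H z * \<phi> z)" by (auto simp: H_def)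
  have "integrable lborel (\<lambda>z. H z * \<phi> z)"
  proof (rule Bochner_Integration.integrable_bound[where f="\<lambda>z. M * H z"])
    show "integrable lborel (\<lambda>z. M * H z)" using Hi by simp
    show "(\<lambda>z. H z * \<phi> z) \<in> borel_measurable lborel" using Hm m by (rule borel_measurable_times)
    show "AE z in lborel. norm (H z * \<phi> z) \<le> norm (M * H z)"
    proof (rule AE_I2)
      fix z
      have M0: "0 \<le> M" using b[of z] by linarith
      have "\<bar>H z\<bar> * \<bar>\<phi> z\<bar> \<le> \<bar>H z\<bar> * M" by (rule mult_left_mono[OF b]) simp
      then show "norm (H z * \<phi> z) \<le> norm (M * H z)" using M0 by (simp add: abs_mult mult.commute)
    qed
  qed
  then show ?thesis unfolding set_integrable_def eq .
qed

lemma test_tensor: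
  assumes r: "sm r" and s: "sm s" and tr: "test_fun X r" and ts: "test_fun Y s"
  shows "test_fun (X \<times> Y) (tensor r s)"
proof -
  have eq: "{z. tensor r s z \<noteq> 0} = {x. r x \<noteq> 0} \<times> {y. s y \<noteq> 0}"
    by (auto simp: tensor_def)
  have c1: "compact (closure {x. r x \<noteq> 0})" "closure {x. r x \<noteq> 0} \<subseteq> X"
    using test_fun_facts(1,2)[OF tr] by auto
  have c2: "compact (closure {x. s x \<noteq> 0})" "closure {x. s x \<noteq> 0} \<subseteq> Y"
    using test_fun_facts(1,2)[OF ts] by auto
  show ?thesis unfolding test_fun_def eq closure_Times
  proof (intro conjI)
    show "smooth (tensor r s)" by (rule smooth_tensor[OF r s])
    show "compact (closure {x. r x \<noteq> 0} \<times> closure {y. s y \<noteq> 0})"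
      by (rule compact_Times[OF c1(1) c2(1)])
    show "closure {x. r x \<noteq> 0} \<times> closure {y. s y \<noteq> 0} \<subseteq> X \<times> Y"
      by (rule Sigma_mono[OF c1(2) c2(2)])
  qed
qed

lemma test_cmult:
  assumes c: "c \<noteq> 0" and r: "sm r" and t: "test_fun X r"
  shows "test_fun X (\<lambda>x. c * r x)"
proof -
  have eq: "{x. c * r x \<noteq> 0} = {x. r x \<noteq> 0}" using c by auto
  show ?thesis using t sm_smooth[OF sm_cmult[OF r]] unfolding test_fun_def eq by simp
qed

lemma inner_pair_eq: "p \<bullet> (1,0) = q \<bullet> (1,0) \<Longrightarrow> p \<bullet> (0,1) = q \<bullet> (0,1) \<Longrightarrow> p = (q::real\<times>real)"
  by (cases p, cases q) simp

lemma norm_sq_pair: "(norm (p::real\<times>real))\<^sup>2 = (p \<bullet> (1,0))\<^sup>2 + (p \<bullet> (0,1))\<^sup>2"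
  by (cases p) (simp add: norm_Pair)

lemma weak_grad_AE_eq:
  fixes u :: "real \<times> real \<Rightarrow> real"
  assumes XY: "open X" "open Y" "bounded X" "bounded Y"
    and w1: "weak_grad (X \<times> Y) u g1" and w2: "weak_grad (X \<times> Y) u g2"
  shows "AE z in lborel. z \<in> X \<times> Y \<longrightarrow> g1 z = g2 z"
proof -
  have Ub: "bounded (X \<times> Y)" using XY by (simp add: bounded_Times)
  have Us: "X \<times> Y \<in> sets lborel" using XY by (simp add: open_Times)
  have comp: "AE z in lborel. z \<in> X \<times> Y \<longrightarrow> g1 z \<bullet> i = g2 z \<bullet> i" if i: "i \<in> Basis" for i
  proof -
    have L1: "L2 (X \<times> Y) (\<lambda>z. g1 z \<bullet> i)" using w1 i by (simp add: weak_grad_def)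
    have L2': "L2 (X \<times> Y) (\<lambda>z. g2 z \<bullet> i)" using w2 i by (simp add: weak_grad_def)
    have I1: "set_integrable lborel (X \<times> Y) (\<lambda>z. g1 z \<bullet> i)" by (rule L2_integrable[OF Ub Us L1])
    have I2: "set_integrable lborel (X \<times> Y) (\<lambda>z. g2 z \<bullet> i)" by (rule L2_integrable[OF Ub Us L2'])
    have "AE z in lborel. z \<in> X \<times> Y \<longrightarrow> g1 z \<bullet> i - g2 z \<bullet> i = 0"
    proof (rule FL_tensor[OF XY(1,2)])
      show "set_integrable lborel (X \<times> Y) (\<lambda>z. g1 z \<bullet> i - g2 z \<bullet> i)"
        by (rule set_integral_diff(1)[OF I1 I2])
      fix r s assume r: "sm r" and s: "sm s" and tr: "test_fun X r" and ts: "test_fun Y s"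
      define \<phi> where "\<phi> = tensor r s"
      have t\<phi>: "test_fun (X \<times> Y) \<phi>" unfolding \<phi>_def by (rule test_tensor[OF r s tr ts])
      obtain M where M: "\<And>z. \<bar>\<phi> z\<bar> \<le> M" using test_bounded[OF t\<phi>] by blast
      have m: "\<phi> \<in> borel_measurable lborel"
        unfolding \<phi>_def by (rule meas_cont[OF smooth_facts(2)[OF smooth_tensor[OF r s]]])
      have J1: "set_integrable lborel (X \<times> Y) (\<lambda>z. (g1 z \<bullet> i) * \<phi> z)"
        by (rule set_integrable_mult_bounded[OF I1 m M])
      have J2: "set_integrable lborel (X \<times> Y) (\<lambda>z. (g2 z \<bullet> i) * \<phi> z)"
        by (rule set_integrable_mult_bounded[OF I2 m M])
      have e1: "(LINT z:X \<times> Y|lborel. u z * frechet_derivative \<phi> (at z) i) = - (LINT z:X \<times> Y|lborel. (g1 z \<bullet> i) * \<phi> z)"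
        using w1 t\<phi> i by (simp add: weak_grad_def)
      have e2: "(LINT z:X \<times> Y|lborel. u z * frechet_derivative \<phi> (at z) i) = - (LINT z:X \<times> Y|lborel. (g2 z \<bullet> i) * \<phi> z)"
        using w2 t\<phi> i by (simp add: weak_grad_def)
      have "(LINT z:X \<times> Y|lborel. (g1 z \<bullet> i - g2 z \<bullet> i) * \<phi> z) =
            (LINT z:X \<times> Y|lborel. (g1 z \<bullet> i) * \<phi> z - (g2 z \<bullet> i) * \<phi> z)"
        by (simp add: left_diff_distrib)
      also have "\<dots> = (LINT z:X \<times> Y|lborel. (g1 z \<bullet> i) * \<phi> z) - (LINT z:X \<times> Y|lborel. (g2 z \<bullet> i) * \<phi> z)"
        by (rule set_integral_diff(2)[OF J1 J2])
      also have "\<dots> = 0" using e1 e2 by simp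
      finally show "(LINT z:X \<times> Y|lborel. (g1 z \<bullet> i - g2 z \<bullet> i) * tensor r s z) = 0"
        by (simp add: \<phi>_def)
    qed
    then show ?thesis by eventually_elim simp
  qed
  have a: "AE z in lborel. z \<in> X \<times> Y \<longrightarrow> g1 z \<bullet> (1,0) = g2 z \<bullet> (1,0)" by (rule comp) (simp add: Basis_real_prod)
  have b: "AE z in lborel. z \<in> X \<times> Y \<longrightarrow> g1 z \<bullet> (0,1) = g2 z \<bullet> (0,1)" by (rule comp) (simp add: Basis_real_prod)
  from a b show ?thesis
  proof eventually_elim
    case (elim z)
    show ?case
    proof
      assume "z \<in> X \<times> Y"
      then show "g1 z = g2 z" using elim by (intro inner_pair_eq) auto
    qed
  qed
qed

lemma norm_int_eq:
  fixes u :: "real \<times> real \<Rightarrow> real"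
  assumes w1: "weak_grad U u g1" and w2: "weak_grad U u g2"
    and ae: "AE z in lborel. z \<in> U \<longrightarrow> g1 z = g2 z"
  shows "(LINT z:U|lborel. (norm (g1 z))\<^sup>2) = (LINT z:U|lborel. (norm (g2 z))\<^sup>2)"
proof -
  have meas: "(\<lambda>z. indicator U z *\<^sub>R (norm (g z))\<^sup>2) \<in> borel_measurable lborel"
    if w: "weak_grad U u g" for g :: "real \<times> real \<Rightarrow> real \<times> real"
  proof -
    have m1: "(\<lambda>z. indicator U z *\<^sub>R (g z \<bullet> (1,0))) \<in> borel_measurable lborel"
      using w by (simp add: weak_grad_def L2_def set_borel_measurable_def Basis_real_prod)
    have m2: "(\<lambda>z. indicator U z *\<^sub>R (g z \<bullet> (0,1))) \<in> borel_measurable lborel"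
      using w by (simp add: weak_grad_def L2_def set_borel_measurable_def Basis_real_prod)
    have eq: "(\<lambda>z. indicator U z *\<^sub>R (norm (g z))\<^sup>2) =
              (\<lambda>z. (indicator U z *\<^sub>R (g z \<bullet> (1,0)))\<^sup>2 + (indicator U z *\<^sub>R (g z \<bullet> (0,1)))\<^sup>2)"
    proof (rule ext)
      fix z show "indicator U z *\<^sub>R (norm (g z))\<^sup>2 = (indicator U z *\<^sub>R (g z \<bullet> (1,0)))\<^sup>2 + (indicator U z *\<^sub>R (g z \<bullet> (0,1)))\<^sup>2"
        by (cases "z \<in> U") (simp_all add: norm_sq_pair)
    qed
    show ?thesis unfolding eq by (intro borel_measurable_add borel_measurable_power m1 m2)
  qed
  show ?thesis unfolding set_lebesgue_integral_def
  proof (rule integral_cong_AE[OF meas[OF w1] meas[OF w2]])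
    show "AE z in lborel. indicator U z *\<^sub>R (norm (g1 z))\<^sup>2 = indicator U z *\<^sub>R (norm (g2 z))\<^sup>2"
      using ae by eventually_elim (simp add: indicator_def)
  qed
qed

theorem lemma3:
  fixes \<Omega>x \<Omega>y :: "real set" and f :: "real \<times> real \<Rightarrow> real"
  assumes "open \<Omega>x" "connected \<Omega>x" "bounded \<Omega>x" "\<Omega>x \<noteq> {}"
      and "open \<Omega>y" "connected \<Omega>y" "bounded \<Omega>y" "\<Omega>y \<noteq> {}"
      and "L2 (\<Omega>x \<times> \<Omega>y) f"
      and "\<not> (AE z in lborel. z \<in> \<Omega>x \<times> \<Omega>y \<longrightarrow> f z = 0)"
  shows "\<exists>r s. H10 \<Omega>x r \<and> H10 \<Omega>y s \<and> H10 (\<Omega>x \<times> \<Omega>y) (tensor r s) \<and>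
           energy (\<Omega>x \<times> \<Omega>y) f (tensor r s) < 0"
proof -
  define \<Omega> where "\<Omega> = \<Omega>x \<times> \<Omega>y"
  have \<Omega>o: "open \<Omega>" using assms(1,5) by (simp add: \<Omega>_def open_Times)
  have \<Omega>b: "bounded \<Omega>" using assms(3,7) by (simp add: \<Omega>_def bounded_Times)
  have \<Omega>s: "\<Omega> \<in> sets lborel" using \<Omega>o by simp
  have fi: "set_integrable lborel \<Omega> f" using L2_integrable[OF \<Omega>b \<Omega>s] assms(9) by (simp add: \<Omega>_def)
  obtain r s where r: "sm r" and s: "sm s" and tr: "test_fun \<Omega>x r" and ts: "test_fun \<Omega>y s"
     and B: "(LINT z:\<Omega>|lborel. f z * tensor r s z) \<noteq> 0"
  proof -
    have "\<exists>r s. sm r \<and> sm s \<and> test_fun \<Omega>x r \<and> test_fun \<Omega>y s \<and> (LINT z:\<Omega>|lborel. f z * tensor r s z) \<noteq> 0"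
    proof (rule ccontr)
      assume no: "\<not> ?thesis"
      have "AE z in lborel. z \<in> \<Omega>x \<times> \<Omega>y \<longrightarrow> f z = 0"
      proof (rule FL_tensor[OF assms(1) assms(5)])
        show "set_integrable lborel (\<Omega>x \<times> \<Omega>y) f" using fi by (simp add: \<Omega>_def)
        fix r s assume "sm r" "sm s" "test_fun \<Omega>x r" "test_fun \<Omega>y s"
        then show "(LINT z:\<Omega>x \<times> \<Omega>y|lborel. f z * tensor r s z) = 0" using no unfolding \<Omega>_def by blast
      qed
      with assms(10) show False by simp
    qed
    then show ?thesis using that by blast
  qed
  define B where "B = (LINT z:\<Omega>|lborel. f z * tensor r s z)"
  define G where "G z = (deriv r (fst z) * s (snd z))\<^sup>2 + (r (fst z) * deriv s (snd z))\<^sup>2" for z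
  define A where "A = (LINT z:\<Omega>|lborel. G z)"
  have A0: "0 \<le> A" unfolding A_def set_lebesgue_integral_def
    by (rule Bochner_Integration.integral_nonneg) (simp add: G_def)
  define c where "c = B / (A + 1)"
  have c0: "c \<noteq> 0" using B A0 by (simp add: c_def B_def)
  have Bc: "B = c * (A + 1)" using A0 by (simp add: c_def)
  define r' where "r' x = c * r x" for x
  have r': "sm r'" unfolding r'_def[abs_def] by (rule sm_cmult[OF r])
  have tr': "test_fun \<Omega>x r'" unfolding r'_def[abs_def] by (rule test_cmult[OF c0 r tr])
  define u where "u = tensor r' s"
  have tu: "test_fun \<Omega> u" unfolding u_def \<Omega>_def by (rule test_tensor[OF r' s tr' ts])
  have H1: "H10 \<Omega>x r'" by (rule H10_test[OF tr' assms(1,3) core_real])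
  have H2: "H10 \<Omega>y s" by (rule H10_test[OF ts assms(5,7) core_real])
  have H3: "H10 \<Omega> u" by (rule H10_test[OF tu \<Omega>o \<Omega>b core_prod])
  have wg: "weak_grad \<Omega> u (grad u)" by (rule weak_grad_smooth[OF test_fun_facts(5)[OF tu] \<Omega>o \<Omega>b core_prod])
  have wg': "weak_grad \<Omega> u (wgrad \<Omega> u)" unfolding wgrad_def by (rule someI[of "weak_grad \<Omega> u", OF wg])
  have ae: "AE z in lborel. z \<in> \<Omega> \<longrightarrow> wgrad \<Omega> u z = grad u z"
    unfolding \<Omega>_def by (rule weak_grad_AE_eq[OF assms(1,5,3,7) wg'[unfolded \<Omega>_def] wg[unfolded \<Omega>_def]])
  have N: "(LINT z:\<Omega>|lborel. (norm (wgrad \<Omega> u z))\<^sup>2) = (LINT z:\<Omega>|lborel. (norm (grad u z))\<^sup>2)"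
    by (rule norm_int_eq[OF wg' wg ae])
  have dr': "deriv r' x = c * deriv r x" for x
    unfolding r'_def[abs_def] by (rule DERIV_imp_deriv[OF DERIV_cmult[OF sm_DERIV[OF r]]])
  have gradu: "(norm (grad u z))\<^sup>2 = c\<^sup>2 * G z" for z
  proof -
    have g1: "grad u z \<bullet> (1,0) = c * deriv r (fst z) * s (snd z)"
      using grad_inner[of "(1,0)" u z] tensor_frechet[OF r' s, of z "(1,0)"]
      by (simp add: Basis_real_prod u_def dr')
    have g2: "grad u z \<bullet> (0,1) = c * r (fst z) * deriv s (snd z)"
      using grad_inner[of "(0,1)" u z] tensor_frechet[OF r' s, of z "(0,1)"]
      by (simp add: Basis_real_prod u_def r'_def)
    show ?thesis unfolding norm_sq_pair g1 g2 G_def by (simp add: power2_eq_square algebra_simps)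
  qed
  have I1: "(LINT z:\<Omega>|lborel. (norm (grad u z))\<^sup>2) = c\<^sup>2 * A"
    unfolding gradu A_def by (rule set_integral_mult_right)
  have fu: "(\<lambda>z. f z * u z) = (\<lambda>z. c * (f z * tensor r s z))"
    by (auto simp: u_def r'_def tensor_def)
  have I2: "(LINT z:\<Omega>|lborel. f z * u z) = c * B"
    unfolding fu B_def by (rule set_integral_mult_right)
  have "energy \<Omega> f u = 1/2 * (c\<^sup>2 * A) - c * (c * (A + 1))"
    unfolding energy_def N I1 I2 Bc ..
  also have "\<dots> = - (c\<^sup>2 * (A / 2 + 1))" by (simp add: power2_eq_square algebra_simps)
  also have "\<dots> < 0"
  proof -
    have "0 < c\<^sup>2" using c0 by simp
    moreover have "0 < A / 2 + 1" using A0 by simp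
    ultimately show ?thesis by simp
  qed
  finally have E: "energy \<Omega> f u < 0" .
  show ?thesis using H1 H2 H3 E unfolding \<Omega>_def u_def by blast
qed

end
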